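(* Let $A$ be a physical system of dimension $m$ whose Hamiltonian has a non-degenerate Bohr spectrum, with energy eigenbasis $\{|x\rangle\}_{x\in[m]}$. Let $\rho=\sum_{x,x'}r_{xx'}|x\rangle\langle x'|$ and $\sigma=\sum_{x,x'}s_{xx'}|x\rangle\langle x'|$ be density matrices on $A$, and suppose $r_{xx'}\neq0$ for all $x,x'\in[m]$. Then there exists a time-translation covariant channel $\mathcal{E}:A\to A$ with $\sigma=\mathcal{E}(\rho)$ if and only if the $m\times m$ matrix $Q$ with entries $$q_{xy}=\begin{cases}\min\left\{1,\frac{s_{xx}}{r_{xx}}\right\}&\text{if }x=y,\\ \frac{s_{xy}}{r_{xy}}&\text{otherwise},\end{cases}$$ is positive semidefinite.
   Context: The Hamiltonian $H^A=\sum_x a_x|x\rangle\langle x|$ has a non-degenerate Bohr spectrum if for all $x,y,x',y'\in[m]$: $a_x-a_y=a_{x'}-a_{y'}$ holds iff ($x=x'$ and $y=y'$) or ($x=y$ and $x'=y'$). A channel $\mathcal{E}:A\to A$ is time-translation covariant if $\mathcal{E}(e^{-iH^At}\rho e^{iH^At})=e^{-iH^At}\mathcal{E}(\rho)e^{iH^At}$ for all $t\in\mathbb{R}$ and all states $\rho$. *)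

theory Defs
  imports Complex_Main "Jordan_Normal_Form.Matrix"
begin

text \<open>Index set [m] is rendered as {0..<m}; operators on A are complex m x m matrices.\<close>

definition nondeg_bohr :: "nat \<Rightarrow> (nat \<Rightarrow> real) \<Rightarrow> bool" where
  "nondeg_bohr m a \<longleftrightarrow> (\<forall>x<m. \<forall>y<m. \<forall>x'<m. \<forall>y'<m.
      (a x - a y = a x' - a y') \<longleftrightarrow> ((x = x' \<and> y = y') \<or> (x = y \<and> x' = y')))"

definition adj :: "complex mat \<Rightarrow> complex mat" where
  "adj A = mat (dim_col A) (dim_row A) (\<lambda>(i,j). cnj (A $$ (j,i)))"

definition psd :: "nat \<Rightarrow> complex mat \<Rightarrow> bool" where
  "psd n A \<longleftrightarrow> A \<in> carrier_mat n n \<and> A = adj A \<and>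
     (\<forall>v :: nat \<Rightarrow> complex. let q = (\<Sum>i<n. \<Sum>j<n. cnj (v i) * A $$ (i,j) * v j)
        in Im q = 0 \<and> Re q \<ge> 0)"

definition mtrace :: "complex mat \<Rightarrow> complex" where
  "mtrace A = (\<Sum>i<dim_row A. A $$ (i,i))"

definition density :: "nat \<Rightarrow> complex mat \<Rightarrow> bool" where
  "density m \<rho> \<longleftrightarrow> psd m \<rho> \<and> mtrace \<rho> = 1"

text \<open>(id_k \<otimes> E) applied to a (k*m) x (k*m) matrix, ordered with the ancilla index as outer
  index: row index a*m+x with a<k, x<m.\<close>
definition block :: "nat \<Rightarrow> complex mat \<Rightarrow> nat \<Rightarrow> nat \<Rightarrow> complex mat" where
  "block m X a b = mat m m (\<lambda>(x,y). X $$ (a*m+x, b*m+y))"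

definition id_tensor :: "nat \<Rightarrow> nat \<Rightarrow> (complex mat \<Rightarrow> complex mat) \<Rightarrow> complex mat \<Rightarrow> complex mat" where
  "id_tensor k m E X = mat (k*m) (k*m)
     (\<lambda>(i,j). E (block m X (i div m) (j div m)) $$ (i mod m, j mod m))"

definition linear_on :: "nat \<Rightarrow> (complex mat \<Rightarrow> complex mat) \<Rightarrow> bool" where
  "linear_on m E \<longleftrightarrow> (\<forall>A\<in>carrier_mat m m. \<forall>B\<in>carrier_mat m m. E (A + B) = E A + E B) \<and>
     (\<forall>A\<in>carrier_mat m m. \<forall>c. E (c \<cdot>\<^sub>m A) = c \<cdot>\<^sub>m E A)"

definition completely_positive :: "nat \<Rightarrow> (complex mat \<Rightarrow> complex mat) \<Rightarrow> bool" where
  "completely_positive m E \<longleftrightarrow> (\<forall>k X. psd (k*m) X \<longrightarrow> psd (k*m) (id_tensor k m E X))"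

definition channel :: "nat \<Rightarrow> (complex mat \<Rightarrow> complex mat) \<Rightarrow> bool" where
  "channel m E \<longleftrightarrow> linear_on m E \<and> (\<forall>A\<in>carrier_mat m m. E A \<in> carrier_mat m m) \<and>
     (\<forall>A\<in>carrier_mat m m. mtrace (E A) = mtrace A) \<and> completely_positive m E"

text \<open>e^{-iH t} for H = diag(a).\<close>
definition evol :: "nat \<Rightarrow> (nat \<Rightarrow> real) \<Rightarrow> real \<Rightarrow> complex mat" where
  "evol m a t = mat m m (\<lambda>(i,j). if i = j then exp (- \<i> * complex_of_real (a i * t)) else 0)"

definition tt_covariant :: "nat \<Rightarrow> (nat \<Rightarrow> real) \<Rightarrow> (complex mat \<Rightarrow> complex mat) \<Rightarrow> bool" where
  "tt_covariant m a E \<longleftrightarrow> (\<forall>t::real. \<forall>\<rho>. density m \<rho> \<longrightarrow>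
      E (evol m a t * \<rho> * adj (evol m a t)) = evol m a t * E \<rho> * adj (evol m a t))"

definition Qmat :: "nat \<Rightarrow> complex mat \<Rightarrow> complex mat \<Rightarrow> complex mat" where
  "Qmat m \<rho> \<sigma> = mat m m (\<lambda>(x,y). if x = y
      then complex_of_real (min 1 (Re (\<sigma> $$ (x,x)) / Re (\<rho> $$ (x,x))))
      else \<sigma> $$ (x,y) / \<rho> $$ (x,y))"

end

theory Submission
  imports Defs "HOL-Library.Complex_Order"
begin


definition fm :: "nat \<Rightarrow> (nat \<Rightarrow> nat \<Rightarrow> complex) \<Rightarrow> (nat \<Rightarrow> complex) \<Rightarrow> complex" where
  "fm n A v = (\<Sum>i<n. \<Sum>j<n. cnj (v i) * A i j * v j)"

lemma nonneg_complex_iff: "0 \<le> (q::complex) \<longleftrightarrow> Im q = 0 \<and> Re q \<ge> 0"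
  by (auto simp: less_eq_complex_def)

lemma psd_iff: "psd n A \<longleftrightarrow> A \<in> carrier_mat n n \<and> (\<forall>i<n. \<forall>j<n. A$$(i,j) = cnj (A$$(j,i)))
   \<and> (\<forall>v. 0 \<le> fm n (\<lambda>i j. A$$(i,j)) v)"
proof -
  have h: "A \<in> carrier_mat n n \<Longrightarrow> (A = adj A) \<longleftrightarrow> (\<forall>i<n. \<forall>j<n. A$$(i,j) = cnj (A$$(j,i)))"
    by (auto simp: adj_def mat_eq_iff)
  show ?thesis unfolding psd_def fm_def Let_def nonneg_complex_iff using h by blast
qed

lemma split_sum: "(\<Sum>i<k*m. h i) = (\<Sum>a<k. \<Sum>x<m. h (a*m+x))" for k m :: nat

proof (induction k)
  case 0 then show ?case by simp
next
  case (Suc k)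
  have "{..<Suc k * m} = {..<k*m} \<union> {k*m..<k*m+m}" by auto
  then have "(\<Sum>i<Suc k*m. h i) = (\<Sum>i<k*m. h i) + (\<Sum>i\<in>{k*m..<k*m+m}. h i)"
    by (simp add: sum.union_disjoint ivl_disj_int)
  also have "(\<Sum>i\<in>{k*m..<k*m+m}. h i) = (\<Sum>x<m. h (k*m+x))"
    using sum.shift_bounds_nat_ivl[of h 0 "k*m" m] by (simp add: lessThan_atLeast0 add.commute)
  finally show ?case using Suc by simp
qed

lemma ifz_simps[simp]: "(if P then a else 0) * b = (if P then a * b else 0)"
  "b * (if P then a else 0) = (if P then b * a else 0)"
  "cnj (if P then a else 0) = (if P then cnj a else 0)" for a b :: complex
  by auto

lemma sum_if_const: "(\<Sum>j\<in>S. if P then f j else 0) = (if P then (\<Sum>j\<in>S. f j) else 0)"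
  by auto

lemma fm_two:
  assumes "n < N" "y < N" "n \<noteq> y"
  shows "fm N A (\<lambda>i. if i = n then \<alpha> else if i = y then \<beta> else 0) =
    cnj \<alpha> * A n n * \<alpha> + cnj \<alpha> * A n y * \<beta> + cnj \<beta> * A y n * \<alpha> + cnj \<beta> * A y y * \<beta>"
proof -
  have e: "\<And>i. (if i = n then \<alpha> else if i = y then \<beta> else 0) = (if i = n then \<alpha> else 0) + (if i = y then \<beta> else 0)"
    using assms by auto
  show ?thesis unfolding fm_def e using assms
    by (simp add: distrib_left distrib_right sum.distrib sum.delta sum_if_const algebra_simps cong: if_cong)
qed

lemma fm_one:
  assumes "n < N"
  shows "fm N A (\<lambda>i. if i = n then \<alpha> else 0) = cnj \<alpha> * A n n * \<alpha>"
  unfolding fm_def using assms by (simp add: sum.delta sum_if_const)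

definition herm :: "nat \<Rightarrow> (nat \<Rightarrow> nat \<Rightarrow> complex) \<Rightarrow> bool" where
  "herm n A \<longleftrightarrow> (\<forall>i<n. \<forall>j<n. A i j = cnj (A j i))"

definition psdf :: "nat \<Rightarrow> (nat \<Rightarrow> nat \<Rightarrow> complex) \<Rightarrow> bool" where
  "psdf n A \<longleftrightarrow> herm n A \<and> (\<forall>v. 0 \<le> fm n A v)"

lemma psdf_diag: assumes "psdf N A" "i < N" shows "0 \<le> A i i"
proof -
  have "0 \<le> fm N A (\<lambda>ia. if ia = i then 1 else 0)" using assms unfolding psdf_def by blast
  then show ?thesis using fm_one[OF assms(2), of A 1] by simp
qed

lemma psdf_zero_row:
  assumes P: "psdf N A" and n: "n < N" and z: "A n n = 0" and y: "y < N"
  shows "A n y = 0"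
proof (rule ccontr)
  assume c0: "A n y \<noteq> 0"
  then have ny: "n \<noteq> y" using z by auto
  define c where "c = A n y"
  define d where "d = Re (A y y)"
  have dy: "A y y = of_real d" "d \<ge> 0" using psdf_diag[OF P y] unfolding d_def
    by (auto simp: less_eq_complex_def complex_eq_iff)
  define s where "s = 1 / (d + 1)"
  have s: "s > 0" "s * d < 1" using dy unfolding s_def by (auto simp: field_simps)
  define N2 where "N2 = (norm c)^2"
  have N2: "N2 > 0" using c0 unfolding N2_def c_def by auto
  have cc: "c * cnj c = of_real N2" unfolding N2_def using complex_norm_square by simp
  have yn: "A y n = cnj c" using P n y unfolding psdf_def herm_def c_def by blast
  define t where "t = - of_real s * cnj c"
  have "0 \<le> fm N A (\<lambda>i. if i = n then 1 else if i = y then t else 0)"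
    using P unfolding psdf_def by blast
  also have "\<dots> = c * t + cnj t * cnj c + cnj t * A y y * t"
    using fm_two[OF n y ny, of A 1 t] z yn unfolding c_def by simp
  also have "\<dots> = of_real (N2 * s * (s * d - 2))"
  proof -
    have ct: "cnj t = - of_real s * c" unfolding t_def by simp
    have 1: "c * t = - of_real (s * N2)" unfolding t_def using cc
      by (metis minus_mult_commute mult.left_commute mult_minus1 of_real_mult)
    have 2: "cnj t * cnj c = - of_real (s * N2)" unfolding ct using cc
      by (metis minus_mult_commute mult.assoc mult_minus1 of_real_mult)
    have "cnj t * A y y * t = of_real (s * s * d) * (c * cnj c)" unfolding ct dy(1) t_def
      by (simp add: algebra_simps)
    then have 3: "cnj t * A y y * t = of_real (s * s * d * N2)" using cc by simp
    show ?thesis unfolding 1 2 3 by (simp add: algebra_simps)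
  qed
  finally have "0 \<le> N2 * s * (s * d - 2)" by (simp add: less_eq_complex_def)
  moreover have "N2 * s * (s * d - 2) < 0" using N2 s by (simp add: mult_pos_neg)
  ultimately show False by simp
qed

definition bil :: "nat \<Rightarrow> (nat \<Rightarrow> nat \<Rightarrow> complex) \<Rightarrow> (nat \<Rightarrow> complex) \<Rightarrow> (nat \<Rightarrow> complex) \<Rightarrow> complex" where
  "bil n A u w = (\<Sum>i<n. \<Sum>j<n. cnj (u i) * A i j * w j)"

lemma fm_bil: "fm n A v = bil n A v v" unfolding fm_def bil_def ..

lemma bil_add1: "bil n A (\<lambda>i. u i + u' i) w = bil n A u w + bil n A u' w"
  unfolding bil_def by (simp add: ring_distribs sum.distrib)

lemma bil_add2: "bil n A u (\<lambda>i. w i + w' i) = bil n A u w + bil n A u w'"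
  unfolding bil_def by (simp add: ring_distribs sum.distrib)

lemma bil_delta1: "k < n \<Longrightarrow> bil n A (\<lambda>i. if i = k then \<beta> else 0) w = cnj \<beta> * (\<Sum>j<n. A k j * w j)"
  unfolding bil_def by (simp add: sum.delta sum_if_const sum_distrib_left mult.assoc)

lemma bil_delta2: "k < n \<Longrightarrow> bil n A u (\<lambda>i. if i = k then \<beta> else 0) = (\<Sum>i<n. cnj (u i) * A i k) * \<beta>"
  unfolding bil_def by (simp add: sum.delta sum_if_const sum_distrib_right)

lemma fm_shift:
  assumes n: "n < N"
  shows "fm N A (\<lambda>i. v i + (if i = n then \<beta> else 0)) = fm N A v + cnj \<beta> * (\<Sum>j<N. A n j * v j)
     + (\<Sum>i<N. cnj (v i) * A i n) * \<beta> + cnj \<beta> * A n n * \<beta>"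
proof -
  have "bil N A (\<lambda>i. if i = n then \<beta> else 0) (\<lambda>i. if i = n then \<beta> else 0) = cnj \<beta> * A n n * \<beta>"
    using bil_delta1[OF n] n by (simp add: sum.delta sum_if_const)
  then show ?thesis unfolding fm_bil bil_add1 bil_add2 bil_delta1[OF n] bil_delta2[OF n]
    by (simp add: algebra_simps)
qed



lemma hermD: "herm N A \<Longrightarrow> i < N \<Longrightarrow> j < N \<Longrightarrow> A i j = cnj (A j i)"
  unfolding herm_def by blast

lemma gram_aux:
  assumes "psdf N A" "\<forall>x<N. \<forall>y<N. (x < n \<or> y < n) \<longrightarrow> A x y = 0"
  shows "\<exists>(L::nat) B. \<forall>x<N. \<forall>y<N. A x y = (\<Sum>l<L. cnj (B l x) * B l y)"
  using assms
proof (induction "N - n" arbitrary: n A)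
  case 0
  then have "\<forall>x<N. \<forall>y<N. A x y = (\<Sum>l<(0::nat). cnj (A l x) * A l y)" by auto
  then show ?case by blast
next
  case (Suc k)
  have nN: "n < N" using Suc(2) by auto
  have hA: "herm N A" using Suc(3) unfolding psdf_def by blast
  show ?case
  proof (cases "A n n = 0")
    case True
    have r: "A n y = 0" if "y < N" for y using psdf_zero_row[OF Suc(3) nN True that] .
    have c: "A x n = 0" if "x < N" for x using r[OF that] hermD[OF hA that nN] by simp
    have "\<forall>x<N. \<forall>y<N. (x < Suc n \<or> y < Suc n) \<longrightarrow> A x y = 0"
    proof (intro allI impI)
      fix x y assume xy: "x < N" "y < N" "x < Suc n \<or> y < Suc n"
      show "A x y = 0"
      proof (cases "x < n \<or> y < n")
        case True then show ?thesis using Suc(4) xy by blast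
      next
        case False then have "x = n \<or> y = n" using xy by auto
        then show ?thesis using r c xy by auto
      qed
    qed
    moreover have "k = N - Suc n" using Suc(2) by arith
    ultimately show ?thesis using Suc(1)[of "Suc n" A] Suc(3) by blast
  next
    case False
    define q where "q = Re (A n n)"
    have qA: "A n n = of_real q" "q > 0" using psdf_diag[OF Suc(3) nN] False unfolding q_def
      by (auto simp: less_eq_complex_def complex_eq_iff)
    define A' where "A' = (\<lambda>x y. A x y - A x n * A n y / A n n)"
    have hA': "herm N A'" unfolding herm_def A'_def
    proof (intro allI impI)
      fix i j assume ij: "i < N" "j < N"
      have e: "cnj (A j i) = A i j" "cnj (A n i) = A i n" "cnj (A j n) = A n j"
        using hermD[OF hA ij] hermD[OF hA ij(1) nN] hermD[OF hA nN ij(2)] by simp_all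
      have "cnj (A j i - A j n * A n i / A n n) = A i j - A n j * A i n / A n n"
        by (simp add: e qA(1))
      then show "A i j - A i n * A n j / A n n = cnj (A j i - A j n * A n i / A n n)"
        by (simp add: mult.commute)
    qed
    have fA': "0 \<le> fm N A' v" for v
    proof -
      define \<gamma> where "\<gamma> = (\<Sum>j<N. A n j * v j)"
      have cg: "(\<Sum>i<N. cnj (v i) * A i n) = cnj \<gamma>" unfolding \<gamma>_def
      proof (subst sum.cong[OF refl])
        show "cnj (v x) * A x n = cnj (A n x * v x)" if "x \<in> {..<N}" for x
        proof -
          have "x < N" using that by simp
          from hermD[OF hA this nN] show ?thesis by simp
        qed
      qed simp
      have "fm N A' v = (\<Sum>i<N. \<Sum>j<N. cnj (v i) * A i j * v j - (cnj (v i) * A i n) * (A n j * v j) / A n n)"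
        unfolding fm_def A'_def by (intro sum.cong refl) (simp add: algebra_simps)
      also have "\<dots> = fm N A v - (\<Sum>i<N. cnj (v i) * A i n) * (\<Sum>j<N. A n j * v j) / A n n"
        unfolding fm_def by (simp add: sum_subtractf sum_product sum_divide_distrib)
      also have "\<dots> = fm N A v - cnj \<gamma> * \<gamma> / A n n" unfolding cg \<gamma>_def ..
      also have "\<dots> = fm N A (\<lambda>i. v i + (if i = n then - \<gamma> / A n n else 0))"
      proof -
        have cb: "cnj (- \<gamma> / A n n) = - cnj \<gamma> / A n n" using qA by simp
        have 1: "cnj (- \<gamma> / A n n) * \<gamma> = - (cnj \<gamma> * \<gamma> / A n n)" unfolding cb by simp
        have 2: "cnj \<gamma> * (- \<gamma> / A n n) = - (cnj \<gamma> * \<gamma> / A n n)" by simp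
        have 3: "cnj (- \<gamma> / A n n) * A n n * (- \<gamma> / A n n) = cnj \<gamma> * \<gamma> / A n n"
          unfolding cb using False by (simp add: divide_simps)
        show ?thesis unfolding fm_shift[OF nN] cg \<gamma>_def[symmetric] 1 2 3 by simp
      qed
      finally show ?thesis using Suc(3) unfolding psdf_def by simp
    qed
    have z': "\<forall>x<N. \<forall>y<N. (x < Suc n \<or> y < Suc n) \<longrightarrow> A' x y = 0"
    proof (intro allI impI)
      fix x y assume xy: "x < N" "y < N" "x < Suc n \<or> y < Suc n"
      show "A' x y = 0"
      proof (cases "x < n \<or> y < n")
        case True
        then show ?thesis using Suc(4) xy nN unfolding A'_def by auto
      next
        case F: False
        then have "x = n \<or> y = n" using xy by auto
        then show ?thesis unfolding A'_def using False by auto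
      qed
    qed
    obtain L :: nat and B where LB: "\<forall>x<N. \<forall>y<N. A' x y = (\<Sum>l<L. cnj (B l x) * B l y)"
    proof -
      have "k = N - Suc n" using Suc(2) by arith
      then show ?thesis using that Suc(1)[of "Suc n" A'] hA' fA' z' unfolding psdf_def by blast
    qed
    define B' where "B' = (\<lambda>l. if l < L then B l else (\<lambda>y. A n y / of_real (sqrt q)))"
    have "\<forall>x<N. \<forall>y<N. A x y = (\<Sum>l<Suc L. cnj (B' l x) * B' l y)"
    proof (intro allI impI)
      fix x y assume xy: "x < N" "y < N"
      have ax: "A x n = cnj (A n x)" using hermD[OF hA xy(1) nN] .
      have "sqrt q * sqrt q = q" using qA(2) by simp
      then have sq: "of_real (sqrt q) * of_real (sqrt q) = A n n" unfolding qA(1)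
        by (metis of_real_mult)
      have "A x y = A' x y + A x n * A n y / A n n" unfolding A'_def by simp
      also have "A x n * A n y / A n n = cnj (A n x / of_real (sqrt q)) * (A n y / of_real (sqrt q))"
        unfolding ax sq[symmetric] by simp
      also have "A' x y = (\<Sum>l<L. cnj (B' l x) * B' l y)" using LB xy unfolding B'_def by simp
      finally show "A x y = (\<Sum>l<Suc L. cnj (B' l x) * B' l y)" unfolding B'_def by simp
    qed
    then show ?thesis by blast
  qed
qed

lemma gram:
  assumes "psdf N A"
  shows "\<exists>(L::nat) B. \<forall>x<N. \<forall>y<N. A x y = (\<Sum>l<L. cnj (B l x) * B l y)"
  using gram_aux[OF assms, of 0] by simp



definition eu :: "nat \<Rightarrow> nat \<Rightarrow> nat \<Rightarrow> complex mat" where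
  "eu m x y = mat m m (\<lambda>(i,j). if i = x \<and> j = y then 1 else 0)"

lemma eu_carrier[simp]: "eu m x y \<in> carrier_mat m m" unfolding eu_def by simp

lemma lin_add: "linear_on m E \<Longrightarrow> A \<in> carrier_mat m m \<Longrightarrow> B \<in> carrier_mat m m \<Longrightarrow> E (A + B) = E A + E B"
  unfolding linear_on_def by blast

lemma lin_smult: "linear_on m E \<Longrightarrow> A \<in> carrier_mat m m \<Longrightarrow> E (c \<cdot>\<^sub>m A) = c \<cdot>\<^sub>m E A"
  unfolding linear_on_def by blast

lemma lin_zero:
  assumes L: "linear_on m E" and cl: "\<forall>A\<in>carrier_mat m m. E A \<in> carrier_mat m m"
    and y: "y < m" "y' < m"
  shows "E (0\<^sub>m m m) $$ (y,y') = 0"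
proof -
  have z: "0\<^sub>m m m \<in> carrier_mat m m" by simp
  have "(0::complex) \<cdot>\<^sub>m 0\<^sub>m m m = 0\<^sub>m m m" by (rule eq_matI) auto
  then have "E (0\<^sub>m m m) = 0 \<cdot>\<^sub>m E (0\<^sub>m m m)" using lin_smult[OF L z, of 0] by simp
  then show ?thesis using cl z y by (metis carrier_matD index_smult_mat(1) mult_zero_left)
qed

lemma expand:
  assumes L: "linear_on m E" and cl: "\<forall>A\<in>carrier_mat m m. E A \<in> carrier_mat m m"
    and A: "A \<in> carrier_mat m m" and y: "y < m" "y' < m"
  shows "E A $$ (y,y') = (\<Sum>x<m. \<Sum>x'<m. A$$(x,x') * E (eu m x x') $$ (y,y'))"
proof -
  define R where "R P = mat m m (\<lambda>(i,j). if (i,j) \<in> P then A$$(i,j) else 0)" for P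
  have Rc: "R P \<in> carrier_mat m m" for P unfolding R_def by simp
  have main: "finite P \<Longrightarrow> E (R P) $$ (y,y') = (\<Sum>p\<in>P. A$$p * E (eu m (fst p) (snd p)) $$ (y,y'))" for P
  proof (induction P rule: finite_induct)
    case empty
    have "R {} = 0\<^sub>m m m" unfolding R_def by (rule eq_matI) auto
    then show ?case using lin_zero[OF L cl y] by simp
  next
    case (insert p P)
    obtain i j where p: "p = (i,j)" by (cases p)
    have "R (insert p P) = R P + A$$p \<cdot>\<^sub>m eu m i j"
      unfolding R_def eu_def p using insert(2) p by (intro eq_matI) auto
    then have "E (R (insert p P)) = E (R P) + A$$p \<cdot>\<^sub>m E (eu m i j)"
      using lin_add[OF L Rc, of "A$$p \<cdot>\<^sub>m eu m i j"] lin_smult[OF L eu_carrier] by simp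
    moreover have "E (R P) \<in> carrier_mat m m" "E (eu m i j) \<in> carrier_mat m m" using cl Rc by auto
    ultimately have "E (R (insert p P)) $$ (y,y') = E (R P) $$ (y,y') + A$$p * E (eu m i j) $$ (y,y')"
      using y by simp
    then show ?case using insert p by simp
  qed
  have "A = R ({..<m} \<times> {..<m})" unfolding R_def using A by (intro eq_matI) auto
  then have "E A $$ (y,y') = (\<Sum>p\<in>{..<m} \<times> {..<m}. A$$p * E (eu m (fst p) (snd p)) $$ (y,y'))"
    using main by simp
  also have "\<dots> = (\<Sum>x<m. \<Sum>x'<m. A$$(x,x') * E (eu m x x') $$ (y,y'))"
    by (simp add: sum.cartesian_product split_beta)
  finally show ?thesis .
qed

lemma psd_outer: "psd n (mat n n (\<lambda>(i,j). u i * cnj (u j)))"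
proof -
  have "0 \<le> fm n (\<lambda>i j. mat n n (\<lambda>(i,j). u i * cnj (u j)) $$ (i,j)) v" for v
  proof -
    define z where "z = (\<Sum>i<n. cnj (v i) * u i)"
    have "fm n (\<lambda>i j. mat n n (\<lambda>(i,j). u i * cnj (u j)) $$ (i,j)) v = (\<Sum>i<n. \<Sum>j<n. (cnj (v i) * u i) * cnj (cnj (v j) * u j))"
      unfolding fm_def by (intro sum.cong refl) (simp add: algebra_simps)
    also have "\<dots> = z * cnj z" unfolding z_def by (simp add: sum_product)
    also have "\<dots> = of_real ((cmod z)^2)" using complex_norm_square[of z] by simp
    finally show ?thesis by (simp add: less_eq_complex_def)
  qed
  then show ?thesis unfolding psd_iff by auto
qed

lemma psd_fm: "psd n A \<Longrightarrow> 0 \<le> fm n (\<lambda>i j. A $$ (i,j)) v"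
  unfolding psd_iff by blast

lemma psd_psdf: "psd n A \<Longrightarrow> psdf n (\<lambda>i j. A $$ (i,j))"
  unfolding psd_iff psdf_def herm_def by blast



lemma evol_conj:
  assumes A: "A \<in> carrier_mat m m"
  shows "evol m a t * A * adj (evol m a t) =
    mat m m (\<lambda>(i,j). exp (- \<i> * complex_of_real (a i * t)) * A$$(i,j) * cnj (exp (- \<i> * complex_of_real (a j * t))))"
proof -
  define w where "w i = exp (- \<i> * complex_of_real (a i * t))" for i
  have U: "evol m a t = mat m m (\<lambda>(i,j). if i = j then w i else 0)" unfolding evol_def w_def ..
  have Ua: "adj (evol m a t) = mat m m (\<lambda>(i,j). if i = j then cnj (w i) else 0)"
    unfolding U adj_def by (intro eq_matI) auto
  have UA: "evol m a t * A = mat m m (\<lambda>(i,j). w i * A$$(i,j))"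
  proof (rule eq_matI)
    fix i j assume ij: "i < dim_row (mat m m (\<lambda>(i,j). w i * A$$(i,j)))" "j < dim_col (mat m m (\<lambda>(i,j). w i * A$$(i,j)))"
    then have "(evol m a t * A) $$ (i,j) = (\<Sum>l<m. (if i = l then w i else 0) * A$$(l,j))"
      using A unfolding U by (simp add: scalar_prod_def lessThan_atLeast0)
    also have "\<dots> = w i * A$$(i,j)" using ij by (simp add: sum.delta)
    finally show "(evol m a t * A) $$ (i,j) = mat m m (\<lambda>(i,j). w i * A$$(i,j)) $$ (i,j)" using ij by simp
  qed (use A in \<open>simp_all add: U\<close>)
  show ?thesis unfolding w_def[symmetric]
  proof (rule eq_matI)
    fix i j assume ij: "i < dim_row (mat m m (\<lambda>(i,j). w i * A$$(i,j) * cnj (w j)))" "j < dim_col (mat m m (\<lambda>(i,j). w i * A$$(i,j) * cnj (w j)))"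
    then have "(evol m a t * A * adj (evol m a t)) $$ (i,j) = (\<Sum>l<m. w i * A$$(i,l) * (if l = j then cnj (w j) else 0))"
      unfolding UA Ua by (simp add: scalar_prod_def lessThan_atLeast0)
    also have "\<dots> = w i * A$$(i,j) * cnj (w j)" using ij by (simp add: sum.delta)
    finally show "(evol m a t * A * adj (evol m a t)) $$ (i,j) = mat m m (\<lambda>(i,j). w i * A$$(i,j) * cnj (w j)) $$ (i,j)" using ij by simp
  qed (simp_all add: UA Ua)
qed

lemma id_tensor_1:
  assumes X: "X \<in> carrier_mat m m" and EX: "E X \<in> carrier_mat m m"
  shows "id_tensor 1 m E X = E X"
proof -
  have b: "block m X 0 0 = X" unfolding block_def using X by (intro eq_matI) auto
  show ?thesis unfolding id_tensor_def using EX b by (intro eq_matI) auto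
qed

lemma channel_psd:
  assumes C: "channel m E" and P: "psd m X"
  shows "psd m (E X)"
proof -
  have X: "X \<in> carrier_mat m m" using P unfolding psd_def by blast
  have EX: "E X \<in> carrier_mat m m" using C X unfolding channel_def by blast
  have "\<forall>k X. psd (k*m) X \<longrightarrow> psd (k*m) (id_tensor k m E X)" using C unfolding channel_def completely_positive_def by blast
  then have "psd (1*m) X \<longrightarrow> psd (1*m) (id_tensor 1 m E X)" by blast
  then have "psd m (id_tensor 1 m E X)" using P unfolding mult_1 by blast
  then show ?thesis using id_tensor_1[of X m E, OF X EX] by simp
qed

lemma tr_one: "x < (m::nat) \<Longrightarrow> (\<Sum>i<m. cnj (if i = x then \<alpha> else 0) * (if i = x then \<alpha> else 0)) = cnj \<alpha> * \<alpha>"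
  by (simp add: sum.delta)

lemma tr_two:
  assumes "x < (m::nat)" "y < m" "x \<noteq> y"
  shows "(\<Sum>i<m. cnj (if i = x then \<alpha> else if i = y then \<beta> else 0) * (if i = x then \<alpha> else if i = y then \<beta> else 0))
    = cnj \<alpha> * \<alpha> + cnj \<beta> * \<beta>"
proof -
  have e: "cnj (if i = x then \<alpha> else if i = y then \<beta> else 0) * (if i = x then \<alpha> else if i = y then \<beta> else 0)
     = (if i = x then cnj \<alpha> * \<alpha> else 0) + (if i = y then cnj \<beta> * \<beta> else 0)" for i
    using assms by auto
  show ?thesis unfolding e using assms by (simp add: sum.distrib sum.delta)
qed

lemma form_zero:
  assumes H: "\<And>u. (\<Sum>i<m. cnj (u i) * u i) = 1 \<Longrightarrow> fm m g u = 0"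
    and x: "x < m" and y: "y < m"
  shows "g x y = 0"
proof -
  have d: "g z z = 0" if z: "z < m" for z
    using H[of "\<lambda>i. if i = z then 1 else 0"] tr_one[OF z, of 1] fm_one[OF z, of g 1] by simp
  show ?thesis
  proof (cases "x = y")
    case True then show ?thesis using d x by simp
  next
    case False
    define s where "s = complex_of_real (1 / sqrt 2)"
    have r: "(1 / sqrt 2) * (1 / sqrt 2) = (1/2::real)" by (simp add: field_simps)
    have ss: "cnj s * s = 1/2" unfolding s_def using arg_cong[OF r, of complex_of_real]
      by (metis Complex.complex_cnj_complex_of_real of_real_divide of_real_mult of_real_numeral of_real_1)
    have "cnj s * s + cnj s * s = 1" by (simp only: ss) simp
    note c1 = this
    have 1: "fm m g (\<lambda>i. if i = x then s else if i = y then s else 0) = 0"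
      by (rule H, rule trans[OF tr_two[OF x y False]]) (fact c1)
    have "cnj s * s + cnj (s * \<i>) * (s * \<i>) = 1" 
    proof -
      have "cnj (s * \<i>) * (s * \<i>) = cnj s * s" by (simp add: algebra_simps)
      then show ?thesis using \<open>cnj s * s + cnj s * s = 1\<close> by simp
    qed
    note c2 = this
    have 2: "fm m g (\<lambda>i. if i = x then s else if i = y then s * \<i> else 0) = 0"
      by (rule H, rule trans[OF tr_two[OF x y False]]) (fact c2)
    have "cnj s * 0 * s + cnj s * g x y * s + cnj s * g y x * s + cnj s * 0 * s = cnj s * s * (g x y + g y x)"
      by (simp add: algebra_simps)
    then have a: "cnj s * s * (g x y + g y x) = 0"
      using 1 fm_two[OF x y False, of g s s] d[OF x] d[OF y] by simp
    have "cnj s * 0 * s + cnj s * g x y * (s * \<i>) + cnj (s * \<i>) * g y x * s + cnj (s * \<i>) * 0 * (s * \<i>) = cnj s * s * \<i> * (g x y - g y x)"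
      by (simp add: algebra_simps)
    then have b: "cnj s * s * \<i> * (g x y - g y x) = 0"
      using 2 fm_two[OF x y False, of g s "s * \<i>"] d[OF x] d[OF y] by simp
    from a ss have "g x y + g y x = 0" by simp
    moreover from b ss have "g x y - g y x = 0" by simp
    ultimately show ?thesis by (simp add: algebra_simps)
  qed
qed



lemma ecis: "exp (- \<i> * complex_of_real r) = cis (- r)"
  by (simp add: cis_conv_exp)

lemma wprod: "exp (- \<i> * complex_of_real (p * t)) * cnj (exp (- \<i> * complex_of_real (q * t)))
   = exp (- \<i> * complex_of_real ((p - q) * t))"
  unfolding ecis cis_cnj cis_mult by (simp add: algebra_simps)

lemma sep:
  assumes "p \<noteq> (q::real)"
  shows "\<exists>t. exp (- \<i> * complex_of_real (p * t)) \<noteq> exp (- \<i> * complex_of_real (q * t))"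
proof
  define t where "t = pi / (p - q)"
  have pt: "- (p * t) = - (q * t) + - pi" unfolding t_def using assms by (simp add: field_simps)
  have "cis (- (p * t)) = cis (- (q * t)) * cis (- pi)" unfolding pt cis_mult ..
  also have "cis (- pi) = -1" by (simp add: cis.ctr complex_eq_iff)
  finally have cc: "cis (- (p * t)) = - cis (- (q * t))" by simp
  show "exp (- \<i> * complex_of_real (p * t)) \<noteq> exp (- \<i> * complex_of_real (q * t))"
    unfolding ecis
  proof (rule notI)
    assume "cis (- (p * t)) = cis (- (q * t))"
    then have "cis (- (q * t)) = - cis (- (q * t))" using cc by simp
    then have "cis (- (q * t)) = 0" by simp
    then show False by simp
  qed
qed

lemma channelD:
  assumes "channel m E"
  shows "linear_on m E" "\<forall>A\<in>carrier_mat m m. E A \<in> carrier_mat m m"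
    "\<And>A. A \<in> carrier_mat m m \<Longrightarrow> mtrace (E A) = mtrace A"
  using assms unfolding channel_def by auto

lemma cov_units:
  assumes C: "channel m E" and T: "tt_covariant m a E" and nd: "nondeg_bohr m a"
    and xs: "x < m" "x' < m" "y < m" "y' < m"
    and ne: "\<not> ((x = y \<and> x' = y') \<or> (x = x' \<and> y = y'))"
  shows "E (eu m x x') $$ (y,y') = 0"
proof -
  note L = channelD(1)[OF C] and cl = channelD(2)[OF C]
  define \<phi> where "\<phi> i j = E (eu m i j) $$ (y,y')" for i j
  define w where "w t i = exp (- \<i> * complex_of_real (a i * t))" for t i
  have key: "(w t x * cnj (w t x') - w t y * cnj (w t y')) * \<phi> x x' = 0" for t
  proof -
    define g where "g i j = (w t i * cnj (w t j) - w t y * cnj (w t y')) * \<phi> i j" for i j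
    have "fm m g u = 0" if u: "(\<Sum>i<m. cnj (u i) * u i) = 1" for u
    proof -
      define D where "D = mat m m (\<lambda>(i,j). cnj (u i) * u j)"
      have Dc: "D \<in> carrier_mat m m" unfolding D_def by simp
      have "psd m D" using psd_outer[of m "\<lambda>i. cnj (u i)"] unfolding D_def by simp
      moreover have "mtrace D = 1" unfolding mtrace_def D_def using u by simp
      ultimately have dens: "density m D" unfolding density_def by simp
      have cov: "E (evol m a t * D * adj (evol m a t)) = evol m a t * E D * adj (evol m a t)"
        using T dens unfolding tt_covariant_def by blast
      have ED: "E D \<in> carrier_mat m m" using cl Dc by blast
      define Dt where "Dt = mat m m (\<lambda>(i,j). w t i * D$$(i,j) * cnj (w t j))"
      have Dtc: "Dt \<in> carrier_mat m m" unfolding Dt_def by simp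
      have "evol m a t * D * adj (evol m a t) = Dt" unfolding evol_conj[OF Dc] Dt_def w_def ..
      then have l: "E (evol m a t * D * adj (evol m a t)) $$ (y,y') = (\<Sum>i<m. \<Sum>j<m. w t i * D$$(i,j) * cnj (w t j) * \<phi> i j)"
        using expand[OF L cl Dtc xs(3,4)] unfolding Dt_def \<phi>_def by simp
      have r: "(evol m a t * E D * adj (evol m a t)) $$ (y,y') = w t y * (\<Sum>i<m. \<Sum>j<m. D$$(i,j) * \<phi> i j) * cnj (w t y')"
        using expand[OF L cl Dc xs(3,4)] xs unfolding evol_conj[OF ED] \<phi>_def w_def by simp
      have "w t y * (\<Sum>i<m. \<Sum>j<m. D$$(i,j) * \<phi> i j) * cnj (w t y') = (\<Sum>i<m. \<Sum>j<m. w t y * (D$$(i,j) * \<phi> i j) * cnj (w t y'))"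
        by (simp add: sum_distrib_left sum_distrib_right)
      then have "(\<Sum>i<m. \<Sum>j<m. w t i * D$$(i,j) * cnj (w t j) * \<phi> i j) - w t y * (\<Sum>i<m. \<Sum>j<m. D$$(i,j) * \<phi> i j) * cnj (w t y')
        = (\<Sum>i<m. \<Sum>j<m. w t i * D$$(i,j) * cnj (w t j) * \<phi> i j - w t y * (D$$(i,j) * \<phi> i j) * cnj (w t y'))"
        by (simp add: sum_subtractf)
      also have "\<dots> = fm m g u" unfolding fm_def g_def
      proof (intro sum.cong refl)
        fix i j assume "i \<in> {..<m}" "j \<in> {..<m}"
        then have "D$$(i,j) = cnj (u i) * u j" unfolding D_def by simp
        then show "w t i * D$$(i,j) * cnj (w t j) * \<phi> i j - w t y * (D$$(i,j) * \<phi> i j) * cnj (w t y')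
          = cnj (u i) * ((w t i * cnj (w t j) - w t y * cnj (w t y')) * \<phi> i j) * u j"
          by (simp add: algebra_simps)
      qed
      finally show ?thesis using l r cov by simp
    qed
    then have "g x x' = 0" using form_zero xs by blast
    then show ?thesis unfolding g_def .
  qed
  have "a x - a x' \<noteq> a y - a y'" using nd xs ne unfolding nondeg_bohr_def by blast
  then obtain t where "exp (- \<i> * complex_of_real ((a x - a x') * t)) \<noteq> exp (- \<i> * complex_of_real ((a y - a y') * t))"
    using sep by blast
  then have "w t x * cnj (w t x') - w t y * cnj (w t y') \<noteq> 0" unfolding w_def wprod by simp
  with key[of t] show ?thesis unfolding \<phi>_def by simp
qed



lemma dm: "(i::nat) < m \<Longrightarrow> (a*m+i) div m = a \<and> (a*m+i) mod m = i"
  by simp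

lemma idx_lt: "(a::nat) < k \<Longrightarrow> i < m \<Longrightarrow> a*m+i < k*m"
proof -
  assume "a < k" "i < m"
  then have "a*m + i < a*m + m" by simp
  also have "\<dots> = (a+1)*m" by simp
  also have "\<dots> \<le> k*m" using \<open>a < k\<close> by (intro mult_right_mono) auto
  finally show ?thesis .
qed

lemma choi_form:
  assumes C: "channel m E"
  shows "0 \<le> (\<Sum>a<m. \<Sum>b<m. cnj (v a) * E (eu m a b) $$ (a,b) * v b)"
proof -
  define u where "u i = (if i div m = i mod m then 1 else 0 :: complex)" for i
  define X where "X = mat (m*m) (m*m) (\<lambda>(i,j). u i * cnj (u j))"
  have PX: "psd (m*m) X" unfolding X_def by (rule psd_outer)
  define Y where "Y = id_tensor m m E X"
  have PY: "psd (m*m) Y" using C PX unfolding channel_def completely_positive_def Y_def by blast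
  define vv where "vv i = (if i div m = i mod m then v (i div m) else 0)" for i
  have bl: "block m X a b = eu m a b" if ab: "a < m" "b < m" for a b
  proof (rule eq_matI)
    fix i j assume ij: "i < dim_row (eu m a b)" "j < dim_col (eu m a b)"
    then have ij': "i < m" "j < m" unfolding eu_def by auto
    have "a*m+i < m*m" "b*m+j < m*m" using idx_lt ab ij' by auto
    then show "block m X a b $$ (i,j) = eu m a b $$ (i,j)"
      unfolding block_def X_def eu_def u_def using ij' dm[OF ij'(1), of a] dm[OF ij'(2), of b] by auto
  qed (auto simp: block_def eu_def)
  have Yab: "Y $$ (a*m+x, b*m+y) = E (eu m a b) $$ (x,y)" if "a < m" "b < m" "x < m" "y < m" for a b x y
  proof -
    have "a*m+x < m*m" "b*m+y < m*m" using idx_lt that by auto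
    then show ?thesis unfolding Y_def id_tensor_def using that dm[of x m a] dm[of y m b] bl by simp
  qed
  have vvd: "vv (a*m+x) = (if a = x then v a else 0)" if "x < m" for a x
    unfolding vv_def dm[OF that, THEN conjunct1] dm[OF that, THEN conjunct2] by simp
  have "fm (m*m) (\<lambda>i j. Y$$(i,j)) vv = (\<Sum>a<m. \<Sum>x<m. \<Sum>b<m. \<Sum>y<m. cnj (vv (a*m+x)) * Y $$ (a*m+x, b*m+y) * vv (b*m+y))"
    unfolding fm_def split_sum ..
  also have "\<dots> = (\<Sum>a<m. \<Sum>x<m. \<Sum>b<m. \<Sum>y<m. (if a = x then (if b = y then cnj (v a) * E (eu m a b) $$ (a,b) * v b else 0) else 0))"
    by (intro sum.cong refl) (simp add: vvd Yab)
  also have "\<dots> = (\<Sum>a<m. \<Sum>b<m. cnj (v a) * E (eu m a b) $$ (a,b) * v b)"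
    by (simp add: sum.delta sum_if_const)
  finally show ?thesis using psd_fm[OF PY] by metis
qed



lemma eu_outer: "eu m i i = mat m m (\<lambda>(k,l). (if k = i then 1 else 0) * cnj (if l = i then 1 else 0))"
  unfolding eu_def by (intro eq_matI) auto

lemma psd_eu: "psd m (eu m i i)"
  unfolding eu_outer by (rule psd_outer)

lemma cnj_mult_self_nonneg: "0 \<le> cnj z * (z::complex)"
  using complex_norm_square[of z] by (simp add: less_eq_complex_def mult.commute)

lemma density_carrier: "density m A \<Longrightarrow> A \<in> carrier_mat m m"
  unfolding density_def psd_def by blast

lemma forward:
  assumes nd: "nondeg_bohr m a"
    and dr: "density m \<rho>" and ds: "density m \<sigma>"
    and nz: "\<forall>x<m. \<forall>x'<m. \<rho> $$ (x,x') \<noteq> 0"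
    and C: "channel m E" and T: "tt_covariant m a E" and S: "\<sigma> = E \<rho>"
  shows "psd m (Qmat m \<rho> \<sigma>)"
proof -
  note L = channelD(1)[OF C] and cl = channelD(2)[OF C]
  have rc: "\<rho> \<in> carrier_mat m m" and sc: "\<sigma> \<in> carrier_mat m m"
    using dr ds density_carrier by auto
  define \<phi> where "\<phi> i j y y' = E (eu m i j) $$ (y,y')" for i j y y'
  have sexp: "\<sigma> $$ (y,y') = (\<Sum>i<m. \<Sum>j<m. \<rho> $$ (i,j) * \<phi> i j y y')" if "y < m" "y' < m" for y y'
    unfolding S \<phi>_def using expand[OF L cl rc that] .
  have off: "\<sigma> $$ (y,y') = \<rho> $$ (y,y') * \<phi> y y' y y'" if yy: "y < m" "y' < m" "y \<noteq> y'" for y y'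
  proof -
    have "(\<Sum>i<m. \<Sum>j<m. \<rho> $$ (i,j) * \<phi> i j y y') =
        (\<Sum>i<m. \<Sum>j<m. (if i = y then (if j = y' then \<rho> $$ (y,y') * \<phi> y y' y y' else 0) else 0))"
    proof (intro sum.cong refl)
      fix i j assume ij: "i \<in> {..<m}" "j \<in> {..<m}"
      show "\<rho> $$ (i,j) * \<phi> i j y y' = (if i = y then (if j = y' then \<rho> $$ (y,y') * \<phi> y y' y y' else 0) else 0)"
      proof (cases "i = y \<and> j = y'")
        case False
        then have "\<phi> i j y y' = 0" unfolding \<phi>_def using cov_units[OF C T nd _ _ yy(1,2), of i j] ij yy(3) by auto
        then show ?thesis using False by auto
      qed auto
    qed
    also have "\<dots> = \<rho> $$ (y,y') * \<phi> y y' y y'" using yy by (simp add: sum.delta sum_if_const)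
    finally show ?thesis using sexp[OF yy(1,2)] by simp
  qed
  have diag: "\<sigma> $$ (y,y) = (\<Sum>i<m. \<rho> $$ (i,i) * \<phi> i i y y)" if y: "y < m" for y
  proof -
    have "(\<Sum>i<m. \<Sum>j<m. \<rho> $$ (i,j) * \<phi> i j y y) = (\<Sum>i<m. \<Sum>j<m. (if j = i then \<rho> $$ (i,i) * \<phi> i i y y else 0))"
    proof (intro sum.cong refl)
      fix i j assume ij: "i \<in> {..<m}" "j \<in> {..<m}"
      show "\<rho> $$ (i,j) * \<phi> i j y y = (if j = i then \<rho> $$ (i,i) * \<phi> i i y y else 0)"
      proof (cases "j = i")
        case False
        then have "\<phi> i j y y = 0" unfolding \<phi>_def using cov_units[OF C T nd _ _ y y, of i j] ij by auto
        then show ?thesis using False by auto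
      qed auto
    qed
    also have "\<dots> = (\<Sum>i<m. \<rho> $$ (i,i) * \<phi> i i y y)" by (simp add: sum.delta')
    finally show ?thesis using sexp[OF y y] by simp
  qed
  have Pr: "psdf m (\<lambda>i j. \<rho> $$ (i,j))" and Ps: "psdf m (\<lambda>i j. \<sigma> $$ (i,j))"
    using dr ds psd_psdf unfolding density_def by auto
  have rnn: "0 \<le> \<rho> $$ (i,i)" if "i < m" for i using psdf_diag[OF Pr that] by simp
  have snn: "0 \<le> \<sigma> $$ (i,i)" if "i < m" for i using psdf_diag[OF Ps that] by simp
  have phinn: "0 \<le> \<phi> i i y y" if "i < m" "y < m" for i y
  proof -
    have "psd m (E (eu m i i))" using channel_psd[OF C psd_eu] .
    from psdf_diag[OF psd_psdf[OF this] that(2)] show ?thesis unfolding \<phi>_def by simp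
  qed
  have phi1: "\<phi> y y y y \<le> 1" if y: "y < m" for y
  proof -
    have "mtrace (E (eu m y y)) = mtrace (eu m y y)" using channelD(3)[OF C eu_carrier] .
    also have "\<dots> = 1" unfolding mtrace_def eu_def using y by (simp add: sum.delta)
    finally have "(\<Sum>k<m. \<phi> y y k k) = 1" unfolding mtrace_def \<phi>_def using cl eu_carrier
      by (metis carrier_matD(1))
    moreover have "\<phi> y y y y \<le> (\<Sum>k<m. \<phi> y y k k)"
      by (rule member_le_sum) (use y phinn in auto)
    ultimately show ?thesis by simp
  qed
  have phis: "\<rho> $$ (y,y) * \<phi> y y y y \<le> \<sigma> $$ (y,y)" if y: "y < m" for y
    unfolding diag[OF y] by (rule member_le_sum[of y]) (use y phinn rnn in \<open>auto intro: mult_nonneg_nonneg\<close>)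
  define Mf where "Mf a b = \<phi> a b a b" for a b
  have Mnn: "0 \<le> fm m Mf v" for v unfolding fm_def Mf_def \<phi>_def using choi_form[OF C, of v] .
  define Q where "Q = Qmat m \<rho> \<sigma>"
  have Qc: "Q \<in> carrier_mat m m" unfolding Q_def Qmat_def by simp
  have Qoff: "Q $$ (a,b) = Mf a b" if "a < m" "b < m" "a \<noteq> b" for a b
    using that off[OF that] nz unfolding Q_def Qmat_def Mf_def by simp
  have Qdiag: "Mf a a \<le> Q $$ (a,a)" if a: "a < m" for a
  proof -
    define r where "r = Re (\<rho> $$ (a,a))"
    define s where "s = Re (\<sigma> $$ (a,a))"
    define p where "p = Re (\<phi> a a a a)"
    have rr: "\<rho> $$ (a,a) = of_real r" "r \<ge> 0" using rnn[OF a] unfolding r_def by (auto simp: less_eq_complex_def complex_eq_iff)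
    have r0: "r > 0" using rr nz a by fastforce
    have ss: "\<sigma> $$ (a,a) = of_real s" using snn[OF a] unfolding s_def by (auto simp: less_eq_complex_def complex_eq_iff)
    have pp: "\<phi> a a a a = of_real p" "p \<ge> 0" using phinn[OF a a] unfolding p_def by (auto simp: less_eq_complex_def complex_eq_iff)
    have p1: "p \<le> 1" using phi1[OF a] pp by (simp add: less_eq_complex_def)
    have "r * p \<le> s" using phis[OF a] rr pp ss by (simp add: less_eq_complex_def)
    then have p2: "p \<le> s / r" using r0 by (simp add: field_simps)
    have "Q $$ (a,a) = of_real (min 1 (s / r))" unfolding Q_def Qmat_def r_def s_def using a by simp
    then show ?thesis unfolding Mf_def pp using p1 p2 by (simp add: less_eq_complex_def)
  qed
  have fmQ: "fm m (\<lambda>i j. Q $$ (i,j)) v = fm m Mf v + (\<Sum>i<m. cnj (v i) * (Q $$ (i,i) - Mf i i) * v i)" for v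
  proof -
    have "fm m (\<lambda>i j. Q $$ (i,j)) v = (\<Sum>i<m. \<Sum>j<m. cnj (v i) * Mf i j * v j + (if j = i then cnj (v i) * (Q $$ (i,i) - Mf i i) * v i else 0))"
      unfolding fm_def
    proof (intro sum.cong refl)
      fix i j assume "i \<in> {..<m}" "j \<in> {..<m}"
      then show "cnj (v i) * Q $$ (i,j) * v j = cnj (v i) * Mf i j * v j + (if j = i then cnj (v i) * (Q $$ (i,i) - Mf i i) * v i else 0)"
        using Qoff[of i j] by (cases "i = j") (auto simp: algebra_simps)
    qed
    also have "\<dots> = fm m Mf v + (\<Sum>i<m. cnj (v i) * (Q $$ (i,i) - Mf i i) * v i)"
      unfolding fm_def by (simp add: sum.distrib sum.delta')
    finally show ?thesis .
  qed
  have "0 \<le> fm m (\<lambda>i j. Q $$ (i,j)) v" for v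
  proof -
    have "0 \<le> (\<Sum>i<m. cnj (v i) * (Q $$ (i,i) - Mf i i) * v i)"
    proof (rule sum_nonneg)
      fix i assume "i \<in> {..<m}"
      then have "0 \<le> Q $$ (i,i) - Mf i i" using Qdiag by simp
      then have "0 \<le> (Q $$ (i,i) - Mf i i) * (cnj (v i) * v i)"
        using cnj_mult_self_nonneg by (rule mult_nonneg_nonneg)
      then show "0 \<le> cnj (v i) * (Q $$ (i,i) - Mf i i) * v i" by (simp add: algebra_simps)
    qed
    then show ?thesis unfolding fmQ using Mnn[of v] by simp
  qed
  moreover have "\<forall>i<m. \<forall>j<m. Q $$ (i,j) = cnj (Q $$ (j,i))"
  proof (intro allI impI)
    fix i j assume ij: "i < m" "j < m"
    have hr: "\<rho> $$ (j,i) = cnj (\<rho> $$ (i,j))" using hermD[of m "\<lambda>i j. \<rho> $$ (i,j)" j i] Pr ij unfolding psdf_def by simp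
    have hs: "\<sigma> $$ (j,i) = cnj (\<sigma> $$ (i,j))" using hermD[of m "\<lambda>i j. \<sigma> $$ (i,j)" j i] Ps ij unfolding psdf_def by simp
    show "Q $$ (i,j) = cnj (Q $$ (j,i))" unfolding Q_def Qmat_def using ij hr hs by simp
  qed
  ultimately show ?thesis unfolding psd_iff Q_def[symmetric] using Qc by blast
qed



definition chan :: "nat \<Rightarrow> complex mat \<Rightarrow> (nat \<Rightarrow> nat \<Rightarrow> real) \<Rightarrow> complex mat \<Rightarrow> complex mat" where
  "chan m Q T A = mat m m (\<lambda>(y,y'). Q$$(y,y') * A$$(y,y') + (if y = y' then (\<Sum>x<m. of_real (T y x) * A$$(x,x)) else 0))"

lemma chan_carrier: "chan m Q T A \<in> carrier_mat m m" unfolding chan_def by simp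

lemma chan_idx: "y < m \<Longrightarrow> y' < m \<Longrightarrow> chan m Q T A $$ (y,y') =
   Q$$(y,y') * A$$(y,y') + (if y = y' then (\<Sum>x<m. of_real (T y x) * A$$(x,x)) else 0)"
  unfolding chan_def by simp

lemma chan_linear: "linear_on m (chan m Q T)"
  unfolding linear_on_def
proof (intro conjI ballI allI)
  fix A B :: "complex mat" assume A: "A \<in> carrier_mat m m" and B: "B \<in> carrier_mat m m"
  show "chan m Q T (A + B) = chan m Q T A + chan m Q T B"
  proof (rule eq_matI)
    fix i j assume "i < dim_row (chan m Q T A + chan m Q T B)" "j < dim_col (chan m Q T A + chan m Q T B)"
    then have ij: "i < m" "j < m" by (auto simp: chan_def)
    have ab: "(A+B)$$(x,y) = A$$(x,y) + B$$(x,y)" if "x < m" "y < m" for x y using that A B by simp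
    have "chan m Q T (A + B) $$ (i,j) = Q$$(i,j) * (A$$(i,j) + B$$(i,j)) +
       (if i = j then (\<Sum>x<m. of_real (T i x) * (A$$(x,x) + B$$(x,x))) else 0)"
      unfolding chan_idx[OF ij] using ab ij by simp
    also have "\<dots> = chan m Q T A $$ (i,j) + chan m Q T B $$ (i,j)"
      unfolding chan_idx[OF ij] by (simp add: distrib_left sum.distrib)
    also have "\<dots> = (chan m Q T A + chan m Q T B) $$ (i,j)"
      using ij chan_carrier[of m Q T A] chan_carrier[of m Q T B] by simp
    finally show "chan m Q T (A + B) $$ (i,j) = (chan m Q T A + chan m Q T B) $$ (i,j)" .
  qed (auto simp: chan_def)
next
  fix A :: "complex mat" and c assume A: "A \<in> carrier_mat m m"
  show "chan m Q T (c \<cdot>\<^sub>m A) = c \<cdot>\<^sub>m chan m Q T A"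
  proof (rule eq_matI)
    fix i j assume "i < dim_row (c \<cdot>\<^sub>m chan m Q T A)" "j < dim_col (c \<cdot>\<^sub>m chan m Q T A)"
    then have ij: "i < m" "j < m" by (auto simp: chan_def)
    have ab: "(c \<cdot>\<^sub>m A)$$(x,y) = c * A$$(x,y)" if "x < m" "y < m" for x y using that A by simp
    have "chan m Q T (c \<cdot>\<^sub>m A) $$ (i,j) = Q$$(i,j) * (c * A$$(i,j)) +
       (if i = j then (\<Sum>x<m. of_real (T i x) * (c * A$$(x,x))) else 0)"
      unfolding chan_idx[OF ij] using ab ij by simp
    also have "\<dots> = c * chan m Q T A $$ (i,j)"
      unfolding chan_idx[OF ij] by (simp add: distrib_left sum_distrib_left mult.left_commute)
    also have "\<dots> = (c \<cdot>\<^sub>m chan m Q T A) $$ (i,j)"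
      using ij chan_carrier[of m Q T A] by simp
    finally show "chan m Q T (c \<cdot>\<^sub>m A) $$ (i,j) = (c \<cdot>\<^sub>m chan m Q T A) $$ (i,j)" .
  qed (auto simp: chan_def)
qed

lemma chan_trace:
  assumes col: "\<And>x. x < m \<Longrightarrow> Q$$(x,x) + (\<Sum>y<m. of_real (T y x)) = 1"
    and that: "A \<in> carrier_mat m m"
  shows "mtrace (chan m Q T A) = mtrace A"
proof -
  have "mtrace (chan m Q T A) = (\<Sum>y<m. Q$$(y,y) * A$$(y,y) + (\<Sum>x<m. of_real (T y x) * A$$(x,x)))"
    unfolding mtrace_def chan_def by simp
  also have "\<dots> = (\<Sum>y<m. Q$$(y,y) * A$$(y,y)) + (\<Sum>x<m. (\<Sum>y<m. of_real (T y x)) * A$$(x,x))"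
  proof -
    have "(\<Sum>y<m. \<Sum>x<m. of_real (T y x) * A$$(x,x)) = (\<Sum>x<m. \<Sum>y<m. of_real (T y x) * A$$(x,x))"
      by (rule sum.swap)
    also have "\<dots> = (\<Sum>x<m. (\<Sum>y<m. of_real (T y x)) * A$$(x,x))" by (simp add: sum_distrib_right)
    finally show ?thesis by (simp add: sum.distrib)
  qed
  also have "\<dots> = (\<Sum>x<m. (Q$$(x,x) + (\<Sum>y<m. of_real (T y x))) * A$$(x,x))"
    by (simp add: sum.distrib distrib_right)
  also have "\<dots> = (\<Sum>x<m. A$$(x,x))" using col by simp
  finally show ?thesis unfolding mtrace_def using that by simp
qed

lemma wcw: "exp (- \<i> * complex_of_real (p * t)) * cnj (exp (- \<i> * complex_of_real (p * t))) = 1"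
  using wprod[of p t p] by simp

lemma chan_cov: "tt_covariant m a (chan m Q T)"
  unfolding tt_covariant_def
proof (intro allI impI)
  fix t :: real and D assume "density m D"
  then have Dc: "D \<in> carrier_mat m m" by (rule density_carrier)
  define w where "w i = exp (- \<i> * complex_of_real (a i * t))" for i
  have ww: "w i * cnj (w i) = 1" for i unfolding w_def by (rule wcw)
  have ww': "w i * X * cnj (w i) = X" "w i * (cnj (w i) * X) = X" for i X using ww[of i] by (simp_all add: algebra_simps)
  show "chan m Q T (evol m a t * D * adj (evol m a t)) = evol m a t * chan m Q T D * adj (evol m a t)"
    unfolding evol_conj[OF Dc] evol_conj[OF chan_carrier] w_def[symmetric]
  proof (rule eq_matI)
    fix i j assume "i < dim_row (mat m m (\<lambda>(i, j). w i * chan m Q T D $$ (i, j) * cnj (w j)))"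
       "j < dim_col (mat m m (\<lambda>(i, j). w i * chan m Q T D $$ (i, j) * cnj (w j)))"
    then have ij: "i < m" "j < m" by auto
    show "chan m Q T (mat m m (\<lambda>(i, j). w i * D $$ (i, j) * cnj (w j))) $$ (i, j) =
          mat m m (\<lambda>(i, j). w i * chan m Q T D $$ (i, j) * cnj (w j)) $$ (i, j)"
      using ij by (cases "i = j") (simp_all add: chan_idx ww' algebra_simps)
  qed (simp_all add: chan_def)
qed



lemma fm_split: "fm (k*m) A w = (\<Sum>a<k. \<Sum>x<m. \<Sum>b<k. \<Sum>y<m. cnj (w (a*m+x)) * A (a*m+x) (b*m+y) * w (b*m+y))"
  unfolding fm_def split_sum ..

lemma swap5: "(\<Sum>a\<in>A. \<Sum>x\<in>X. \<Sum>b\<in>B. \<Sum>y\<in>Y. \<Sum>l\<in>L. f a x b y l) = (\<Sum>l\<in>L. \<Sum>a\<in>A. \<Sum>x\<in>X. \<Sum>b\<in>B. \<Sum>y\<in>Y. f a x b y l)"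
proof -
  have s1: "(\<Sum>y\<in>Y. \<Sum>l\<in>L. f a x b y l) = (\<Sum>l\<in>L. \<Sum>y\<in>Y. f a x b y l)" for a x b by (rule sum.swap)
  have s2: "(\<Sum>b\<in>B. \<Sum>l\<in>L. \<Sum>y\<in>Y. f a x b y l) = (\<Sum>l\<in>L. \<Sum>b\<in>B. \<Sum>y\<in>Y. f a x b y l)" for a x by (rule sum.swap)
  have s3: "(\<Sum>x\<in>X. \<Sum>l\<in>L. \<Sum>b\<in>B. \<Sum>y\<in>Y. f a x b y l) = (\<Sum>l\<in>L. \<Sum>x\<in>X. \<Sum>b\<in>B. \<Sum>y\<in>Y. f a x b y l)" for a by (rule sum.swap)
  have s4: "(\<Sum>a\<in>A. \<Sum>l\<in>L. \<Sum>x\<in>X. \<Sum>b\<in>B. \<Sum>y\<in>Y. f a x b y l) = (\<Sum>l\<in>L. \<Sum>a\<in>A. \<Sum>x\<in>X. \<Sum>b\<in>B. \<Sum>y\<in>Y. f a x b y l)" by (rule sum.swap)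
  show ?thesis by (simp only: s1 s2 s3 s4)
qed

lemma swap4b: "(\<Sum>a\<in>A. \<Sum>x\<in>X. \<Sum>b\<in>B. \<Sum>z\<in>Z. f a x b z) = (\<Sum>x\<in>X. \<Sum>z\<in>Z. \<Sum>a\<in>A. \<Sum>b\<in>B. f a x b z)"
proof -
  have s1: "(\<Sum>b\<in>B. \<Sum>z\<in>Z. f a x b z) = (\<Sum>z\<in>Z. \<Sum>b\<in>B. f a x b z)" for a x by (rule sum.swap)
  have s2: "(\<Sum>a\<in>A. \<Sum>x\<in>X. \<Sum>z\<in>Z. \<Sum>b\<in>B. f a x b z) = (\<Sum>x\<in>X. \<Sum>a\<in>A. \<Sum>z\<in>Z. \<Sum>b\<in>B. f a x b z)" by (rule sum.swap)
  have s3: "(\<Sum>a\<in>A. \<Sum>z\<in>Z. \<Sum>b\<in>B. f a x b z) = (\<Sum>z\<in>Z. \<Sum>a\<in>A. \<Sum>b\<in>B. f a x b z)" for x by (rule sum.swap)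
  show ?thesis by (simp only: s1 s2 s3)
qed

lemma chan_tensor_idx:
  assumes i: "i < k*m" and j: "j < k*m" and X: "X \<in> carrier_mat (k*m) (k*m)"
  shows "id_tensor k m (chan m Q T) X $$ (i,j) = Q$$(i mod m, j mod m) * X$$(i,j) +
     (if i mod m = j mod m then (\<Sum>z<m. of_real (T (i mod m) z) * X$$((i div m)*m+z, (j div m)*m+z)) else 0)"
proof -
  have m0: "m > 0" using i by (cases m) auto
  have im: "i mod m < m" "j mod m < m" using m0 by auto
  have bl: "block m X (i div m) (j div m) $$ (x,y) = X$$((i div m)*m+x, (j div m)*m+y)" if "x < m" "y < m" for x y
    unfolding block_def using that by simp
  have "id_tensor k m (chan m Q T) X $$ (i,j) = chan m Q T (block m X (i div m) (j div m)) $$ (i mod m, j mod m)"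
    unfolding id_tensor_def using i j by simp
  also have "\<dots> = Q$$(i mod m, j mod m) * X$$((i div m)*m + i mod m, (j div m)*m + j mod m) +
     (if i mod m = j mod m then (\<Sum>z<m. of_real (T (i mod m) z) * X$$((i div m)*m+z, (j div m)*m+z)) else 0)"
    unfolding chan_idx[OF im] bl[OF im] using bl by simp
  also have "(i div m)*m + i mod m = i" by simp
  also have "(j div m)*m + j mod m = j" by simp
  finally show ?thesis .
qed

lemma div_lt: "i < k*m \<Longrightarrow> i div m < (k::nat)"
  by (metis less_mult_imp_div_less)

lemma chan_cp:
  assumes PQ: "psdf m (\<lambda>i j. Q$$(i,j))" and Tn: "\<And>y x. 0 \<le> T y x"
  shows "completely_positive m (chan m Q T)"
  unfolding completely_positive_def
proof (intro allI impI)
  fix k X assume PX: "psd (k*m) X"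
  have Xc: "X \<in> carrier_mat (k*m) (k*m)" using PX unfolding psd_def by blast
  have hX: "herm (k*m) (\<lambda>i j. X$$(i,j))" using psd_psdf[OF PX] unfolding psdf_def by blast
  have hQ: "herm m (\<lambda>i j. Q$$(i,j))" using PQ unfolding psdf_def by blast
  define Y where "Y = id_tensor k m (chan m Q T) X"
  have Yc: "Y \<in> carrier_mat (k*m) (k*m)" unfolding Y_def id_tensor_def by simp
  have Yab: "Y$$(a*m+x, b*m+y) = Q$$(x,y) * X$$(a*m+x, b*m+y) +
      (if x = y then (\<Sum>z<m. of_real (T x z) * X$$(a*m+z, b*m+z)) else 0)"
    if "a < k" "b < k" "x < m" "y < m" for a b x y
  proof -
    have "a*m+x < k*m" "b*m+y < k*m" using idx_lt that by auto
    from chan_tensor_idx[OF this Xc, of Q T] show ?thesis unfolding Y_def using dm[of x m a] dm[of y m b] that by simp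
  qed
  have herY: "Y$$(i,j) = cnj (Y$$(j,i))" if ij: "i < k*m" "j < k*m" for i j
  proof -
    have m0: "m > 0" using ij by (cases m) auto
    have im: "i mod m < m" "j mod m < m" using m0 by auto
    have id: "i div m < k" "j div m < k" using ij div_lt by auto
    have e1: "Q$$(i mod m, j mod m) = cnj (Q$$(j mod m, i mod m))" using hermD[OF hQ im] by simp
    have e2: "X$$(i,j) = cnj (X$$(j,i))" using hermD[OF hX ij] by simp
    have e3: "X$$((i div m)*m+z, (j div m)*m+z) = cnj (X$$((j div m)*m+z, (i div m)*m+z))" if "z < m" for z
    proof -
      have "(i div m)*m+z < k*m" "(j div m)*m+z < k*m" using idx_lt id that by auto
      from hermD[OF hX this] show ?thesis by simp
    qed
    have "(\<Sum>z<m. of_real (T (i mod m) z) * X$$((i div m)*m+z, (j div m)*m+z)) =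
        cnj (\<Sum>z<m. of_real (T (i mod m) z) * X$$((j div m)*m+z, (i div m)*m+z))"
      using e3 by simp
    then show ?thesis unfolding Y_def chan_tensor_idx[OF ij Xc] chan_tensor_idx[OF ij(2,1) Xc] e1 e2
      by auto
  qed
  obtain L :: nat and B where LB: "\<forall>x<m. \<forall>y<m. Q$$(x,y) = (\<Sum>l<L. cnj (B l x) * B l y)"
    using gram[OF PQ] by blast
  have "0 \<le> fm (k*m) (\<lambda>i j. Y$$(i,j)) v" for v
  proof -
    define S where "S a b x = (\<Sum>z<m. of_real (T x z) * X$$(a*m+z, b*m+z))" for a b x
    define P1 where "P1 = (\<Sum>a<k. \<Sum>x<m. \<Sum>b<k. \<Sum>y<m. cnj (v (a*m+x)) * Q$$(x,y) * X$$(a*m+x, b*m+y) * v (b*m+y))"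
    define P2 where "P2 = (\<Sum>a<k. \<Sum>x<m. \<Sum>b<k. \<Sum>y<m. cnj (v (a*m+x)) * (if x = y then S a b x else 0) * v (b*m+y))"
    have split: "fm (k*m) (\<lambda>i j. Y$$(i,j)) v = P1 + P2"
    proof -
      have "fm (k*m) (\<lambda>i j. Y$$(i,j)) v = (\<Sum>a<k. \<Sum>x<m. \<Sum>b<k. \<Sum>y<m.
          cnj (v (a*m+x)) * Q$$(x,y) * X$$(a*m+x, b*m+y) * v (b*m+y) + cnj (v (a*m+x)) * (if x = y then S a b x else 0) * v (b*m+y))"
        unfolding fm_split
      proof (intro sum.cong refl)
        fix a x b y assume "a \<in> {..<k}" "x \<in> {..<m}" "b \<in> {..<k}" "y \<in> {..<m}"
        then show "cnj (v (a*m+x)) * Y $$ (a*m+x, b*m+y) * v (b*m+y) =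
          cnj (v (a*m+x)) * Q$$(x,y) * X$$(a*m+x, b*m+y) * v (b*m+y) + cnj (v (a*m+x)) * (if x = y then S a b x else 0) * v (b*m+y)"
          unfolding S_def using Yab[of a b x y] by (simp add: algebra_simps)
      qed
      then show ?thesis unfolding P1_def P2_def by (simp add: sum.distrib)
    qed
    have p1: "0 \<le> P1"
    proof -
      define w where "w l i = B l (i mod m) * v i" for l i
      have "P1 = (\<Sum>a<k. \<Sum>x<m. \<Sum>b<k. \<Sum>y<m. \<Sum>l<L. cnj (w l (a*m+x)) * X$$(a*m+x, b*m+y) * w l (b*m+y))"
        unfolding P1_def
      proof (intro sum.cong refl)
        fix a x b y assume "a \<in> {..<k}" "x \<in> {..<m}" "b \<in> {..<k}" "y \<in> {..<m}"
        then have xy: "x < m" "y < m" by auto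
        have wd: "w l (a'*m+c) = B l c * v (a'*m+c)" if "c < m" for l a' c
          unfolding w_def dm[OF that, THEN conjunct2] ..
        have "cnj (v (a*m+x)) * Q$$(x,y) * X$$(a*m+x, b*m+y) * v (b*m+y) =
           (\<Sum>l<L. cnj (B l x) * B l y) * (cnj (v (a*m+x)) * X$$(a*m+x, b*m+y) * v (b*m+y))"
          using LB xy by (simp add: algebra_simps)
        also have "\<dots> = (\<Sum>l<L. cnj (B l x * v (a*m+x)) * X$$(a*m+x, b*m+y) * (B l y * v (b*m+y)))"
          unfolding sum_distrib_right by (rule sum.cong[OF refl]) (simp add: algebra_simps)
        finally show "cnj (v (a*m+x)) * Q$$(x,y) * X$$(a*m+x, b*m+y) * v (b*m+y) =
           (\<Sum>l<L. cnj (w l (a*m+x)) * X$$(a*m+x, b*m+y) * w l (b*m+y))"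
          by (simp only: wd xy)
      qed
      also have "\<dots> = (\<Sum>l<L. fm (k*m) (\<lambda>i j. X$$(i,j)) (w l))"
        unfolding fm_split by (rule swap5)
      finally show ?thesis using psd_fm[OF PX] by (simp add: sum_nonneg)
    qed
    have p2: "0 \<le> P2"
    proof -
      define u where "u x z i = (if i mod m = z then v ((i div m)*m + x) else 0)" for x z i
      have "P2 = (\<Sum>a<k. \<Sum>x<m. \<Sum>b<k. cnj (v (a*m+x)) * S a b x * v (b*m+x))"
        unfolding P2_def by (simp add: sum.delta)
      also have "\<dots> = (\<Sum>a<k. \<Sum>x<m. \<Sum>b<k. \<Sum>z<m. of_real (T x z) * (cnj (v (a*m+x)) * X$$(a*m+z, b*m+z) * v (b*m+x)))"
        unfolding S_def by (simp add: sum_distrib_left sum_distrib_right algebra_simps)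
      also have "\<dots> = (\<Sum>x<m. \<Sum>z<m. \<Sum>a<k. \<Sum>b<k. of_real (T x z) * (cnj (v (a*m+x)) * X$$(a*m+z, b*m+z) * v (b*m+x)))"
        by (rule swap4b)
      also have "\<dots> = (\<Sum>x<m. \<Sum>z<m. of_real (T x z) * fm (k*m) (\<lambda>i j. X$$(i,j)) (u x z))"
      proof (intro sum.cong refl)
        fix x z assume "x \<in> {..<m}" "z \<in> {..<m}"
        then have xz: "x < m" "z < m" by auto
        have ud: "u x z (a*m+c) = (if c = z then v (a*m+x) else 0)" if "c < m" for a c
          unfolding u_def dm[OF that, THEN conjunct1] dm[OF that, THEN conjunct2] by simp
        have "fm (k*m) (\<lambda>i j. X$$(i,j)) (u x z) = (\<Sum>a<k. \<Sum>c<m. \<Sum>b<k. \<Sum>d<m.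
            (if c = z then (if d = z then cnj (v (a*m+x)) * X$$(a*m+z, b*m+z) * v (b*m+x) else 0) else 0))"
          unfolding fm_split by (intro sum.cong refl) (simp add: ud)
        also have "\<dots> = (\<Sum>a<k. \<Sum>b<k. cnj (v (a*m+x)) * X$$(a*m+z, b*m+z) * v (b*m+x))"
          using xz by (simp add: sum.delta' sum_if_const)
        finally show "(\<Sum>a<k. \<Sum>b<k. of_real (T x z) * (cnj (v (a*m+x)) * X$$(a*m+z, b*m+z) * v (b*m+x))) =
          of_real (T x z) * fm (k*m) (\<lambda>i j. X$$(i,j)) (u x z)"
          by (simp add: sum_distrib_left)
      qed
      finally show ?thesis
      proof -
        assume eq: "P2 = (\<Sum>x<m. \<Sum>z<m. of_real (T x z) * fm (k*m) (\<lambda>i j. X$$(i,j)) (u x z))"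
        have "0 \<le> of_real (T x z) * fm (k*m) (\<lambda>i j. X$$(i,j)) (u x z)" for x z
          using Tn[of x z] psd_fm[OF PX, of "u x z"] by (intro mult_nonneg_nonneg) (auto simp: less_eq_complex_def)
        then show ?thesis unfolding eq by (simp add: sum_nonneg)
      qed
    qed
    show ?thesis unfolding split using p1 p2 by simp
  qed
  moreover have "\<forall>i<k*m. \<forall>j<k*m. Y$$(i,j) = cnj (Y$$(j,i))" using herY by blast
  ultimately show "psd (k*m) (id_tensor k m (chan m Q T) X)" unfolding psd_iff Y_def[symmetric] using Yc by blast
qed



lemma backward:
  assumes dr: "density m \<rho>" and ds: "density m \<sigma>"
    and nz: "\<forall>x<m. \<forall>x'<m. \<rho> $$ (x,x') \<noteq> 0"
    and PQ: "psd m (Qmat m \<rho> \<sigma>)"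
  shows "\<exists>E. channel m E \<and> tt_covariant m a E \<and> \<sigma> = E \<rho>"
proof -
  define Q where "Q = Qmat m \<rho> \<sigma>"
  define r where "r x = Re (\<rho> $$ (x,x))" for x
  define s where "s x = Re (\<sigma> $$ (x,x))" for x
  define d where "d x = min 1 (s x / r x)" for x
  define e where "e x = r x - d x * r x" for x
  define f where "f x = s x - d x * r x" for x
  define F where "F = (\<Sum>x<m. e x)"
  define T where "T y x = (if x < m \<and> y < m then e x * f y / (F * r x) else 0)" for y x
  have rc: "\<rho> \<in> carrier_mat m m" and sc: "\<sigma> \<in> carrier_mat m m"
    using dr ds density_carrier by auto
  have Pr: "psdf m (\<lambda>i j. \<rho> $$ (i,j))" and Ps: "psdf m (\<lambda>i j. \<sigma> $$ (i,j))"
    using dr ds psd_psdf unfolding density_def by auto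
  have rr: "\<rho> $$ (x,x) = of_real (r x)" "r x > 0" if x: "x < m" for x
  proof -
    have "0 \<le> \<rho> $$ (x,x)" using psdf_diag[OF Pr x] by simp
    moreover have "\<rho> $$ (x,x) \<noteq> 0" using nz x by blast
    ultimately have "Im (\<rho> $$ (x,x)) = 0" "Re (\<rho> $$ (x,x)) > 0"
      by (auto simp: less_eq_complex_def complex_eq_iff)
    then show "\<rho> $$ (x,x) = of_real (r x)" "r x > 0" unfolding r_def
      by (auto simp: complex_eq_iff)
  qed
  have ss: "\<sigma> $$ (x,x) = of_real (s x)" "s x \<ge> 0" if x: "x < m" for x
  proof -
    have "0 \<le> \<sigma> $$ (x,x)" using psdf_diag[OF Ps x] by simp
    then show "\<sigma> $$ (x,x) = of_real (s x)" "s x \<ge> 0" unfolding s_def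
      by (auto simp: less_eq_complex_def complex_eq_iff)
  qed
  have d1: "d x \<le> 1" for x unfolding d_def by simp
  have d2: "d x * r x \<le> s x" if x: "x < m" for x
  proof -
    have "d x \<le> s x / r x" unfolding d_def by simp
    then show ?thesis using rr(2)[OF x] by (simp add: field_simps)
  qed
  have enn: "e x \<ge> 0" if "x < m" for x
    unfolding e_def using d1[of x] rr(2)[OF that] by (simp add: mult_left_le_one_le)
  have fnn: "f x \<ge> 0" if "x < m" for x unfolding f_def using d2[OF that] by simp
  have sr: "(\<Sum>x<m. r x) = 1"
  proof -
    have "mtrace \<rho> = 1" using dr unfolding density_def by blast
    then have "(\<Sum>x<m. \<rho> $$ (x,x)) = 1" unfolding mtrace_def using rc by simp
    then have "Re (\<Sum>x<m. \<rho> $$ (x,x)) = 1" by simp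
    then show ?thesis unfolding r_def by (simp add: Re_sum)
  qed
  have ssum: "(\<Sum>x<m. s x) = 1"
  proof -
    have "mtrace \<sigma> = 1" using ds unfolding density_def by blast
    then have "(\<Sum>x<m. \<sigma> $$ (x,x)) = 1" unfolding mtrace_def using sc by simp
    then have "Re (\<Sum>x<m. \<sigma> $$ (x,x)) = 1" by simp
    then show ?thesis unfolding s_def by (simp add: Re_sum)
  qed
  have sf: "(\<Sum>x<m. f x) = F"
  proof -
    have "(\<Sum>x<m. e x) - (\<Sum>x<m. f x) = (\<Sum>x<m. r x) - (\<Sum>x<m. s x)"
      unfolding e_def f_def by (simp add: sum_subtractf)
    then show ?thesis unfolding F_def using sr ssum by simp
  qed
  have F0e: "e x = 0" if "F = 0" "x < m" for x
  proof -
    have "\<forall>x\<in>{..<m}. e x = 0" using sum_nonneg_eq_0_iff[of "{..<m}" e] enn that unfolding F_def by auto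
    then show ?thesis using that by auto
  qed
  have F0f: "f x = 0" if "F = 0" "x < m" for x
  proof -
    have "\<forall>x\<in>{..<m}. f x = 0" using sum_nonneg_eq_0_iff[of "{..<m}" f] fnn that sf by auto
    then show ?thesis using that by auto
  qed
  have Fnn: "0 \<le> F" unfolding F_def by (rule sum_nonneg) (simp add: enn)
  have Tn: "0 \<le> T y x" for y x
  proof (cases "x < m \<and> y < m")
    case True
    then have x: "x < m" and y: "y < m" by auto
    have "0 \<le> e x * f y" using enn[OF x] fnn[OF y] by simp
    moreover have "0 \<le> F * r x" using Fnn rr(2)[OF x] by simp
    ultimately have "0 \<le> e x * f y" "0 \<le> F * r x" by auto
    then show ?thesis unfolding T_def using True by (simp add: divide_nonneg_nonneg)
  qed (auto simp: T_def)
  have Qd: "Q $$ (x,x) = of_real (d x)" if "x < m" for x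
    unfolding Q_def Qmat_def d_def s_def r_def using that by simp
  have colsum: "(\<Sum>y<m. T y x) = e x / r x" if x: "x < m" for x
  proof -
    have "(\<Sum>y<m. T y x) = (\<Sum>y<m. e x / (F * r x) * f y)"
      unfolding T_def using x by (intro sum.cong refl) auto
    also have "\<dots> = e x / (F * r x) * F" unfolding sum_distrib_left[symmetric] sf ..
    also have "\<dots> = e x / r x" using F0e[OF _ x] rr(2)[OF x] by (cases "F = 0") auto
    finally show ?thesis .
  qed
  have col: "Q$$(x,x) + (\<Sum>y<m. of_real (T y x)) = 1" if x: "x < m" for x
  proof -
    have "d x + e x / r x = 1" unfolding e_def using rr(2)[OF x] by (simp add: field_simps)
    then have "of_real (d x) + of_real (\<Sum>y<m. T y x) = (1::complex)" unfolding colsum[OF x]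
      by (metis of_real_1 of_real_add)
    then show ?thesis unfolding Qd[OF x] by simp
  qed
  have rowsum: "(\<Sum>x<m. T y x * r x) = f y" if y: "y < m" for y
  proof -
    have "(\<Sum>x<m. T y x * r x) = (\<Sum>x<m. f y / F * e x)"
    proof (intro sum.cong refl)
      fix x assume "x \<in> {..<m}"
      then have x: "x < m" by simp
      show "T y x * r x = f y / F * e x" unfolding T_def using x y rr(2)[OF x] by (simp add: field_simps)
    qed
    also have "\<dots> = f y / F * F" unfolding sum_distrib_left[symmetric] F_def ..
    also have "\<dots> = f y" using F0f[OF _ y] by (cases "F = 0") auto
    finally show ?thesis .
  qed
  have eqs: "\<sigma> = chan m Q T \<rho>"
  proof (rule eq_matI)
    fix y y' assume "y < dim_row (chan m Q T \<rho>)" "y' < dim_col (chan m Q T \<rho>)"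
    then have yy: "y < m" "y' < m" using chan_carrier[of m Q T \<rho>] by auto
    show "\<sigma> $$ (y,y') = chan m Q T \<rho> $$ (y,y')"
    proof (cases "y = y'")
      case False
      then show ?thesis unfolding chan_idx[OF yy] Q_def Qmat_def using yy nz by simp
    next
      case True
      have "(\<Sum>x<m. complex_of_real (T y x) * \<rho> $$ (x,x)) = (\<Sum>x<m. complex_of_real (T y x * r x))"
        using rr(1) by (intro sum.cong refl) simp
      also have "\<dots> = of_real (f y)" unfolding of_real_sum[symmetric] rowsum[OF yy(1)] ..
      finally have "chan m Q T \<rho> $$ (y,y) = of_real (d y) * of_real (r y) + of_real (f y)"
        unfolding chan_idx[OF yy(1) yy(1)] Qd[OF yy(1)] rr(1)[OF yy(1)] by simp
      also have "\<dots> = of_real (s y)" unfolding f_def by simp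
      finally show ?thesis using True ss(1)[OF yy(1)] by simp
    qed
  qed (use sc in \<open>simp_all add: chan_def\<close>)
  have "channel m (chan m Q T)"
    unfolding channel_def
  proof (intro conjI ballI)
    show "linear_on m (chan m Q T)" by (rule chan_linear)
    show "chan m Q T A \<in> carrier_mat m m" for A by (rule chan_carrier)
    show "mtrace (chan m Q T A) = mtrace A" if "A \<in> carrier_mat m m" for A
      by (rule chan_trace[of m Q T A, OF col that])
    have "psdf m (\<lambda>i j. Q $$ (i,j))" using psd_psdf PQ unfolding Q_def by blast
    then show "completely_positive m (chan m Q T)" by (rule chan_cp) (rule Tn)
  qed
  then show ?thesis using chan_cov eqs by blast
qed


theorem theorem3:
  fixes m :: nat and a :: "nat \<Rightarrow> real" and \<rho> \<sigma> :: "complex mat"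
  assumes "nondeg_bohr m a"
    and "density m \<rho>" and "density m \<sigma>"
    and "\<forall>x<m. \<forall>x'<m. \<rho> $$ (x,x') \<noteq> 0"
  shows "(\<exists>E. channel m E \<and> tt_covariant m a E \<and> \<sigma> = E \<rho>) \<longleftrightarrow> psd m (Qmat m \<rho> \<sigma>)"
proof
  assume "\<exists>E. channel m E \<and> tt_covariant m a E \<and> \<sigma> = E \<rho>"
  then obtain E where "channel m E" "tt_covariant m a E" "\<sigma> = E \<rho>" by blast
  then show "psd m (Qmat m \<rho> \<sigma>)" using forward assms by blast
next
  assume "psd m (Qmat m \<rho> \<sigma>)"
  then show "\<exists>E. channel m E \<and> tt_covariant m a E \<and> \<sigma> = E \<rho>" using backward assms(2-4) by blast
qed

end
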